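(* Let $\widetilde{A}$ be a $\Lambda$-standard weight algebra over the DVR $\mathcal{O}$, let $\widetilde{N}$ be an $\widetilde{A}$-lattice, $\lambda\in\Lambda$ and $v\in\widetilde{N}_\lambda$. (a) $v$ is $\lambda$-primitive if and only if $v\notin\widetilde{N}\cap\widetilde{N}'_K(\lambda)$ and $\mathcal{O}v+(\widetilde{N}\cap\widetilde{N}'_K(\lambda))$ is $\mathcal{O}$-pure in $\widetilde{N}$. (b) $v$ is strongly $\lambda$-primitive if and only if there is a non-negative integer $i$ such that $v\in\widetilde{\operatorname{rad}}^i\widetilde{N}$, $v\notin\widetilde{N}\cap(\operatorname{rad}^{i+1}\widetilde{N}_K+\widetilde{N}'_K(\lambda))$, and $\mathcal{O}v+\widetilde{N}\cap(\operatorname{rad}^{i+1}\widetilde{N}_K+\widetilde{N}'_K(\lambda))$ is $\mathcal{O}$-pure in $\widetilde{N}$. (c) If $v$ is strongly $\lambda$-primitive, it is $\lambda$-primitive.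
   Context: $\mathcal{O}$ is a DVR with fraction field $K$ and residue field $k$. $\widetilde{A}$ is an $\mathcal{O}$-free finite $\mathcal{O}$-algebra with orthogonal idempotents $e_\nu$ ($\nu\in X$) summing to $1$ making it a $\Lambda$-standard weight algebra: for $\Lambda\subseteq X$ partially ordered, the irreducible $\widetilde{A}_K$-modules $L_K(\lambda)$ and $\widetilde{A}_k$-modules $L(\lambda)$ are both indexed by $\Lambda$, with $\dim e_\lambda L_K(\lambda)=\dim e_\lambda L(\lambda)=1$ and, for $\mu\in\Lambda$, $e_\mu L_K(\lambda)\ne0$ or $e_\mu L(\lambda)\neq0$ implies $\mu\le\lambda$. For a module $M$, $M_\nu=e_\nu M$. An $\widetilde{A}$-lattice is $\mathcal{O}$-finite and torsion-free; a submodule $\widetilde{S}\subseteq\widetilde{M}$ is pure if $\widetilde{M}/\widetilde{S}$ is torsion-free. $\operatorname{rad}^i\widetilde{N}_K=(\operatorname{rad}\widetilde{A}_K)^i\widetilde{N}_K$, $\widetilde{\operatorname{rad}}^i\widetilde{N}=\widetilde{N}\cap\operatorname{rad}^i\widetilde{N}_K$, $\operatorname{gr}\widetilde{N}=\bigoplus_i\widetilde{\operatorname{rad}}^i\widetilde{N}/\widetilde{\operatorname{rad}}^{i+1}\widetilde{N}$. $\widetilde{N}'_K(\lambda)$ is the $\widetilde{A}_K$-submodule of $\widetilde{N}_K$ generated by all $\mu$-weight vectors with $\mu\in\Lambda$, $\mu>\lambda$. $v\in\widetilde{N}_\lambda$ is $\lambda$-primitive if the image of $\mathcal{O}v$ in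 $\widetilde{N}/(\widetilde{N}\cap\widetilde{N}'_K(\lambda))$ is nonzero and pure. $v$ is strongly $\lambda$-primitive if for some $i\ge0$ with $v\in\widetilde{\operatorname{rad}}^i\widetilde{N}$, its class $[v]\in(\operatorname{gr}\widetilde{N})_i$ has the property that the image of $\mathcal{O}[v]$ in $\operatorname{gr}(\widetilde{N}/(\widetilde{N}\cap\widetilde{N}'_K(\lambda)))$ (under the natural map) is nonzero and pure. *)

theory Defs
  imports "HOL-Computational_Algebra.Fraction_Field"
begin

definition is_DVR :: "'o::idom itself \<Rightarrow> bool" where
  "is_DVR _ \<longleftrightarrow> (\<exists>p::'o. p \<noteq> 0 \<and> \<not> p dvd 1 \<and>
      (\<forall>x::'o. x \<noteq> 0 \<longrightarrow> (\<exists>u n. u dvd 1 \<and> x = u * p ^ n)))"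

definition ofO :: "'o::idom \<Rightarrow> 'o fract" where
  "ofO x = Fract x 1"

(* A_K (the type 'a) is a K-algebra via the central ring homomorphism kap *)
definition K_algebra :: "('o::idom fract \<Rightarrow> 'a::ring_1) \<Rightarrow> bool" where
  "K_algebra kap \<longleftrightarrow> kap 1 = 1 \<and> (\<forall>x y. kap (x + y) = kap x + kap y) \<and>
      (\<forall>x y. kap (x * y) = kap x * kap y) \<and> (\<forall>c a. kap c * a = a * kap c)"

(* A (the set Aset) is an O-subalgebra of A_K, O-free of finite rank on a basis b
   which is a K-basis of A_K, i.e. A_K = K \<otimes>_O A *)
definition O_order :: "('o::idom fract \<Rightarrow> 'a::ring_1) \<Rightarrow> 'a set \<Rightarrow> bool" where
  "O_order kap A \<longleftrightarrow> 1 \<in> A \<and> (\<forall>x\<in>A. \<forall>y\<in>A. x + y \<in> A \<and> x * y \<in> A \<and> - x \<in> A) \<and>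
     (\<exists>b::'a list. set b \<subseteq> A \<and>
        A = {\<Sum>i<length b. kap (ofO (os ! i)) * b ! i | os. length os = length b} \<and>
        (\<forall>x. \<exists>!cs. length cs = length b \<and> x = (\<Sum>i<length b. kap (cs ! i) * b ! i)))"

definition idem_decomp :: "'x set \<Rightarrow> ('x \<Rightarrow> 'a::ring_1) \<Rightarrow> 'a set \<Rightarrow> bool" where
  "idem_decomp X e A \<longleftrightarrow> (\<forall>\<nu>\<in>X. e \<nu> \<in> A) \<and>
     (\<forall>\<nu>\<in>X. \<forall>\<mu>\<in>X. e \<nu> * e \<mu> = (if \<nu> = \<mu> then e \<nu> else 0)) \<and>
     finite {\<nu>\<in>X. e \<nu> \<noteq> 0} \<and> sum e {\<nu>\<in>X. e \<nu> \<noteq> 0} = 1"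

definition is_module :: "'r::ring_1 set \<Rightarrow> ('r \<Rightarrow> 'm::ab_group_add \<Rightarrow> 'm) \<Rightarrow> 'm set \<Rightarrow> bool" where
  "is_module R act M \<longleftrightarrow> 0 \<in> M \<and> (\<forall>x\<in>M. \<forall>y\<in>M. x + y \<in> M \<and> - x \<in> M) \<and>
     (\<forall>r\<in>R. \<forall>x\<in>M. act r x \<in> M) \<and>
     (\<forall>r\<in>R. \<forall>x\<in>M. \<forall>y\<in>M. act r (x + y) = act r x + act r y) \<and>
     (\<forall>r\<in>R. \<forall>s\<in>R. \<forall>x\<in>M. act (r + s) x = act r x + act s x \<and> act (r * s) x = act r (act s x)) \<and>
     (\<forall>x\<in>M. act 1 x = x)"

definition is_submodule :: "'r::ring_1 set \<Rightarrow> ('r \<Rightarrow> 'm::ab_group_add \<Rightarrow> 'm) \<Rightarrow> 'm set \<Rightarrow> 'm set \<Rightarrow> bool" where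
  "is_submodule R act M S \<longleftrightarrow> S \<subseteq> M \<and> 0 \<in> S \<and> (\<forall>x\<in>S. \<forall>y\<in>S. x + y \<in> S \<and> - x \<in> S) \<and>
     (\<forall>r\<in>R. \<forall>x\<in>S. act r x \<in> S)"

definition simple_module :: "'r::ring_1 set \<Rightarrow> ('r \<Rightarrow> 'm::ab_group_add \<Rightarrow> 'm) \<Rightarrow> 'm set \<Rightarrow> bool" where
  "simple_module R act M \<longleftrightarrow> is_module R act M \<and> M \<noteq> {0} \<and>
     (\<forall>S. is_submodule R act M S \<longrightarrow> S = {0} \<or> S = M)"

definition mod_iso :: "'r::ring_1 set \<Rightarrow> ('r \<Rightarrow> 'm::ab_group_add \<Rightarrow> 'm) \<Rightarrow> 'm set
    \<Rightarrow> ('r \<Rightarrow> 'n::ab_group_add \<Rightarrow> 'n) \<Rightarrow> 'n set \<Rightarrow> bool" where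
  "mod_iso R act1 M1 act2 M2 \<longleftrightarrow> (\<exists>f. bij_betw f M1 M2 \<and> (\<forall>x\<in>M1. \<forall>y\<in>M1. f (x + y) = f x + f y) \<and>
     (\<forall>r\<in>R. \<forall>x\<in>M1. f (act1 r x) = act2 r (f x)))"

definition left_ideal :: "'r::ring_1 set \<Rightarrow> 'r set \<Rightarrow> bool" where
  "left_ideal R I \<longleftrightarrow> I \<subseteq> R \<and> 0 \<in> I \<and> (\<forall>x\<in>I. \<forall>y\<in>I. x + y \<in> I) \<and> (\<forall>r\<in>R. \<forall>x\<in>I. r * x \<in> I)"

definition max_left_ideal :: "'r::ring_1 set \<Rightarrow> 'r set \<Rightarrow> bool" where
  "max_left_ideal R I \<longleftrightarrow> left_ideal R I \<and> I \<noteq> R \<and>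
     (\<forall>J. left_ideal R J \<and> I \<subseteq> J \<longrightarrow> J = I \<or> J = R)"

definition jac :: "'r::ring_1 set \<Rightarrow> 'r set" where
  "jac R = {x\<in>R. \<forall>I. max_left_ideal R I \<longrightarrow> x \<in> I}"

definition wsp :: "('a \<Rightarrow> 'm \<Rightarrow> 'm) \<Rightarrow> ('x \<Rightarrow> 'a) \<Rightarrow> 'm set \<Rightarrow> 'x \<Rightarrow> 'm set" where
  "wsp act e M \<nu> = act (e \<nu>) ` M"

(* A-modules on which the maximal ideal of O acts by zero = A_k-modules *)
definition kmod :: "('o::idom fract \<Rightarrow> 'a::ring_1) \<Rightarrow> 'a set \<Rightarrow> ('a \<Rightarrow> 'm::ab_group_add \<Rightarrow> 'm) \<Rightarrow> 'm set \<Rightarrow> bool" where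
  "kmod kap A act M \<longleftrightarrow> is_module A act M \<and>
     (\<forall>c0::'o. \<not> c0 dvd 1 \<longrightarrow> (\<forall>x\<in>M. act (kap (ofO c0)) x = 0))"

definition std_weight_alg ::
  "('o::idom fract \<Rightarrow> 'a::ring_1) \<Rightarrow> 'a set \<Rightarrow> 'x set \<Rightarrow> ('x \<Rightarrow> 'a) \<Rightarrow> 'x set \<Rightarrow> ('x \<Rightarrow> 'x \<Rightarrow> bool)
   \<Rightarrow> ('x \<Rightarrow> 'l1::ab_group_add set) \<Rightarrow> ('x \<Rightarrow> 'a \<Rightarrow> 'l1 \<Rightarrow> 'l1)
   \<Rightarrow> ('x \<Rightarrow> 'l2::ab_group_add set) \<Rightarrow> ('x \<Rightarrow> 'a \<Rightarrow> 'l2 \<Rightarrow> 'l2) \<Rightarrow> bool" where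
  "std_weight_alg kap A X e Lam le LK actK L actk \<longleftrightarrow>
     K_algebra kap \<and> O_order kap A \<and> idem_decomp X e A \<and> Lam \<subseteq> X \<and>
     (\<forall>lam\<in>Lam. le lam lam) \<and> (\<forall>lam\<in>Lam. \<forall>\<mu>\<in>Lam. le lam \<mu> \<and> le \<mu> lam \<longrightarrow> lam = \<mu>) \<and>
     (\<forall>lam\<in>Lam. \<forall>\<mu>\<in>Lam. \<forall>\<nu>\<in>Lam. le lam \<mu> \<and> le \<mu> \<nu> \<longrightarrow> le lam \<nu>) \<and>
     \<comment> \<open>irreducible A_K-modules L_K(lambda)\<close>
     (\<forall>lam\<in>Lam. simple_module UNIV (actK lam) (LK lam)) \<and>
     (\<forall>lam\<in>Lam. \<forall>\<mu>\<in>Lam. lam \<noteq> \<mu> \<longrightarrow> \<not> mod_iso UNIV (actK lam) (LK lam) (actK \<mu>) (LK \<mu>)) \<and>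
     (\<forall>I. max_left_ideal UNIV I \<longrightarrow> (\<exists>lam\<in>Lam. \<exists>w\<in>LK lam. {a. actK lam a w = 0} = I)) \<and>
     (\<forall>lam\<in>Lam. \<exists>w\<in>wsp (actK lam) e (LK lam) lam. w \<noteq> 0 \<and>
         (\<forall>u\<in>wsp (actK lam) e (LK lam) lam. \<exists>c. u = actK lam (kap c) w)) \<and>
     (\<forall>lam\<in>Lam. \<forall>\<mu>\<in>Lam. wsp (actK lam) e (LK lam) \<mu> \<noteq> {0} \<longrightarrow> le \<mu> lam) \<and>
     \<comment> \<open>irreducible A_k-modules L(lambda)\<close>
     (\<forall>lam\<in>Lam. kmod kap A (actk lam) (L lam) \<and> simple_module A (actk lam) (L lam)) \<and>
     (\<forall>lam\<in>Lam. \<forall>\<mu>\<in>Lam. lam \<noteq> \<mu> \<longrightarrow> \<not> mod_iso A (actk lam) (L lam) (actk \<mu>) (L \<mu>)) \<and>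
     (\<forall>I. max_left_ideal A I \<and> (\<forall>c0::'o. \<not> c0 dvd 1 \<longrightarrow> (\<forall>x\<in>A. kap (ofO c0) * x \<in> I)) \<longrightarrow>
         (\<exists>lam\<in>Lam. \<exists>w\<in>L lam. {a\<in>A. actk lam a w = 0} = I)) \<and>
     (\<forall>lam\<in>Lam. \<exists>w\<in>wsp (actk lam) e (L lam) lam. w \<noteq> 0 \<and>
         (\<forall>u\<in>wsp (actk lam) e (L lam) lam. \<exists>c0::'o. u = actk lam (kap (ofO c0)) w)) \<and>
     (\<forall>lam\<in>Lam. \<forall>\<mu>\<in>Lam. wsp (actk lam) e (L lam) \<mu> \<noteq> {0} \<longrightarrow> le \<mu> lam)"

definition smO :: "('o::idom fract \<Rightarrow> 'a) \<Rightarrow> ('a \<Rightarrow> 'm \<Rightarrow> 'm) \<Rightarrow> 'o \<Rightarrow> 'm \<Rightarrow> 'm" where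
  "smO kap act c0 x = act (kap (ofO c0)) x"

(* An A-lattice N, realised inside N_K = K \<otimes>_O N (the set VK with A_K-action act) *)
definition A_lattice :: "('o::idom fract \<Rightarrow> 'a::ring_1) \<Rightarrow> 'a set \<Rightarrow> ('a \<Rightarrow> 'm::ab_group_add \<Rightarrow> 'm)
    \<Rightarrow> 'm set \<Rightarrow> 'm set \<Rightarrow> bool" where
  "A_lattice kap A act VK N \<longleftrightarrow> is_module UNIV act VK \<and> is_module A act N \<and> N \<subseteq> VK \<and>
     (\<exists>G. finite G \<and> G \<subseteq> N \<and> N = {\<Sum>g\<in>G. smO kap act (f g) g | f. True}) \<and>
     VK = {act (kap c) x | c x. x \<in> N}"

inductive_set gspan :: "('m \<Rightarrow> 'm \<Rightarrow> 'm) \<Rightarrow> 'm \<Rightarrow> 'm set \<Rightarrow> 'm set" for pl z S where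
  gspan_zero: "z \<in> gspan pl z S"
| gspan_gen: "s \<in> S \<Longrightarrow> s \<in> gspan pl z S"
| gspan_plus: "x \<in> gspan pl z S \<Longrightarrow> y \<in> gspan pl z S \<Longrightarrow> pl x y \<in> gspan pl z S"

fun radpow :: "('m \<Rightarrow> 'm \<Rightarrow> 'm) \<Rightarrow> 'm \<Rightarrow> ('a \<Rightarrow> 'm \<Rightarrow> 'm) \<Rightarrow> 'a set \<Rightarrow> 'm set \<Rightarrow> nat \<Rightarrow> 'm set" where
  "radpow pl z act J M 0 = M"
| "radpow pl z act J M (Suc i) = gspan pl z {act j m | j m. j \<in> J \<and> m \<in> radpow pl z act J M i}"

definition setplus :: "('m \<Rightarrow> 'm \<Rightarrow> 'm) \<Rightarrow> 'm set \<Rightarrow> 'm set \<Rightarrow> 'm set" where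
  "setplus pl P Q = {pl p q | p q. p \<in> P \<and> q \<in> Q}"

definition coset :: "('m \<Rightarrow> 'm \<Rightarrow> 'm) \<Rightarrow> 'm \<Rightarrow> 'm set \<Rightarrow> 'm set" where
  "coset pl x T = {pl x t | t. t \<in> T}"

definition quot :: "('m \<Rightarrow> 'm \<Rightarrow> 'm) \<Rightarrow> 'm set \<Rightarrow> 'm set \<Rightarrow> 'm set set" where
  "quot pl M T = (\<lambda>x. coset pl x T) ` M"

definition qmap :: "('m \<Rightarrow> 'm \<Rightarrow> 'm) \<Rightarrow> 'm set \<Rightarrow> ('m \<Rightarrow> 'm) \<Rightarrow> 'm set \<Rightarrow> 'm set" where
  "qmap pl T g C = {pl (g c) t | c t. c \<in> C \<and> t \<in> T}"

definition pure_in :: "('o::zero \<Rightarrow> 'q \<Rightarrow> 'q) \<Rightarrow> 'q set \<Rightarrow> 'q set \<Rightarrow> bool" where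
  "pure_in sm M P \<longleftrightarrow> (\<forall>c0. c0 \<noteq> 0 \<longrightarrow> (\<forall>x\<in>M. sm c0 x \<in> P \<longrightarrow> x \<in> P))"

definition Nprime :: "('x \<Rightarrow> 'a::ring_1) \<Rightarrow> 'x set \<Rightarrow> ('x \<Rightarrow> 'x \<Rightarrow> bool) \<Rightarrow> ('a \<Rightarrow> 'm::ab_group_add \<Rightarrow> 'm)
    \<Rightarrow> 'm set \<Rightarrow> 'x \<Rightarrow> 'm set" where
  "Nprime e Lam le act VK lam =
     gspan (+) 0 {act a w | a w. \<exists>\<mu>\<in>Lam. le lam \<mu> \<and> \<mu> \<noteq> lam \<and> w \<in> wsp act e VK \<mu>}"

definition radK :: "('a::ring_1 \<Rightarrow> 'm::ab_group_add \<Rightarrow> 'm) \<Rightarrow> 'm set \<Rightarrow> nat \<Rightarrow> 'm set" where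
  "radK act VK i = radpow (+) 0 act (jac UNIV) VK i"

(* lambda-primitive: image of Ov in N/(N \<inter> N'_K(lambda)) is nonzero and pure *)
definition primitive ::
  "('o::idom fract \<Rightarrow> 'a::ring_1) \<Rightarrow> ('x \<Rightarrow> 'a) \<Rightarrow> 'x set \<Rightarrow> ('x \<Rightarrow> 'x \<Rightarrow> bool)
   \<Rightarrow> ('a \<Rightarrow> 'm::ab_group_add \<Rightarrow> 'm) \<Rightarrow> 'm set \<Rightarrow> 'm set \<Rightarrow> 'x \<Rightarrow> 'm \<Rightarrow> bool" where
  "primitive kap e Lam le act VK N lam v \<longleftrightarrow> v \<in> wsp act e N lam \<and>
     (let S = N \<inter> Nprime e Lam le act VK lam;
          img = {coset (+) (smO kap act c0 v) S | c0. True}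
      in img \<noteq> {coset (+) 0 S} \<and>
         pure_in (\<lambda>c0. qmap (+) S (smO kap act c0)) (quot (+) N S) img)"

(* strongly lambda-primitive.  The lattice N/(N \<inter> N'_K(lambda)) is realised inside its
   K-span N_K/N'_K(lambda) as cosets of N'_K(lambda); its radical filtration is computed there. *)
definition strongly_primitive ::
  "('o::idom fract \<Rightarrow> 'a::ring_1) \<Rightarrow> ('x \<Rightarrow> 'a) \<Rightarrow> 'x set \<Rightarrow> ('x \<Rightarrow> 'x \<Rightarrow> bool)
   \<Rightarrow> ('a \<Rightarrow> 'm::ab_group_add \<Rightarrow> 'm) \<Rightarrow> 'm set \<Rightarrow> 'm set \<Rightarrow> 'x \<Rightarrow> 'm \<Rightarrow> bool" where
  "strongly_primitive kap e Lam le act VK N lam v \<longleftrightarrow> v \<in> wsp act e N lam \<and>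
     (let NP = Nprime e Lam le act VK lam;
          plQ = setplus (+);
          actQ = (\<lambda>a. qmap (+) NP (act a));
          smQ = (\<lambda>c0. qmap (+) NP (smO kap act c0));
          QK = quot (+) VK NP;
          Q = quot (+) N NP;
          radtQ = (\<lambda>j. Q \<inter> radpow plQ NP actQ (jac UNIV) QK j)
      in \<exists>i. v \<in> N \<inter> radK act VK i \<and>
          (let T = radtQ (Suc i);
               grQ = quot plQ (radtQ i) T;
               img = {coset plQ (smQ c0 (coset (+) v NP)) T | c0. True}
           in img \<noteq> {coset plQ NP T} \<and>
              pure_in (\<lambda>c0. qmap plQ T (smQ c0)) grQ img))"

end

theory Submission
  imports Defs
begin


lemma ofO_mult: "ofO (a * b) = ofO a * ofO b"
  by (simp add: ofO_def)
lemma ofO_diff: "ofO (a - b) = ofO a - ofO b"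
  by (simp add: ofO_def)
lemma ofO_1: "ofO 1 = 1"
  by (simp add: ofO_def One_fract_def)

lemma kapO_in_A:
  assumes ka: "K_algebra kap" and oo: "O_order kap A"
  shows "kap (ofO c) \<in> A"
proof -
  have km: "\<And>x y. kap (x * y) = kap x * kap y" using ka unfolding K_algebra_def by blast
  have k1: "kap 1 = 1" using ka unfolding K_algebra_def by blast
  from oo obtain b where bA: "A = {\<Sum>i<length b. kap (ofO (os ! i)) * b ! i | os. length os = length b}"
    and one: "1 \<in> A" unfolding O_order_def by blast
  from one bA obtain os where los: "length os = length b"
    and e1: "1 = (\<Sum>i<length b. kap (ofO (os ! i)) * b ! i)" by blast
  have "kap (ofO c) = kap (ofO c) * 1" by simp
  also have "\<dots> = (\<Sum>i<length b. kap (ofO c) * (kap (ofO (os ! i)) * b ! i))"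
    by (subst e1) (simp add: sum_distrib_left)
  also have "\<dots> = (\<Sum>i<length b. kap (ofO (map ((*) c) os ! i)) * b ! i)"
    by (rule sum.cong) (auto simp: los ofO_mult km mult.assoc)
  finally have e: "kap (ofO c) = (\<Sum>i<length b. kap (ofO (map ((*) c) os ! i)) * b ! i)" .
  have "length (map ((*) c) os) = length b" using los by simp
  then show ?thesis unfolding bA using e by blast
qed

lemma mem_coset_gen: "y \<in> coset pl x T \<longleftrightarrow> (\<exists>t\<in>T. y = pl x t)"
  unfolding coset_def by blast
lemma mem_setplus: "z \<in> setplus pl P Q \<longleftrightarrow> (\<exists>p\<in>P. \<exists>q\<in>Q. z = pl p q)"
  unfolding setplus_def by blast
lemma mem_qmap: "y \<in> qmap pl T g C \<longleftrightarrow> (\<exists>c\<in>C. \<exists>t\<in>T. y = pl (g c) t)"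
  unfolding qmap_def by blast

locale ctx =
  fixes kap :: "'o::idom fract \<Rightarrow> 'a::ring_1" and act :: "'a \<Rightarrow> 'm::ab_group_add \<Rightarrow> 'm"
    and VK N :: "'m set"
  assumes kalg: "K_algebra kap" and mVK: "is_module UNIV act VK" and NVK: "N \<subseteq> VK"
    and N0: "0 \<in> N" and Nadd: "\<And>x y. x \<in> N \<Longrightarrow> y \<in> N \<Longrightarrow> x + y \<in> N"
    and Nneg: "\<And>x. x \<in> N \<Longrightarrow> - x \<in> N"
    and Nsm: "\<And>x c. x \<in> N \<Longrightarrow> smO kap act c x \<in> N"
begin

lemma kap_add: "kap (x + y) = kap x + kap y" using kalg unfolding K_algebra_def by blast
lemma kap_mult: "kap (x * y) = kap x * kap y" using kalg unfolding K_algebra_def by blast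
lemma kap1: "kap 1 = 1" using kalg unfolding K_algebra_def by blast
lemma kap0: "kap 0 = 0"
proof -
  have "kap (0 + 0) = kap 0 + kap 0" by (rule kap_add)
  then show ?thesis by simp
qed
lemma kap_diff: "kap (x - y) = kap x - kap y"
  using kap_add[of "x - y" y] by (simp add: algebra_simps)

lemma VK0: "0 \<in> VK" using mVK by (simp add: is_module_def)
lemma VKadd: "x \<in> VK \<Longrightarrow> y \<in> VK \<Longrightarrow> x + y \<in> VK" using mVK by (simp add: is_module_def)
lemma VKneg: "x \<in> VK \<Longrightarrow> - x \<in> VK" using mVK by (simp add: is_module_def)
lemma VKact: "x \<in> VK \<Longrightarrow> act a x \<in> VK" using mVK by (simp add: is_module_def)
lemma act_add: "x \<in> VK \<Longrightarrow> y \<in> VK \<Longrightarrow> act a (x + y) = act a x + act a y"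
  using mVK by (simp add: is_module_def)
lemma act_addsc: "x \<in> VK \<Longrightarrow> act (a + b) x = act a x + act b x"
  using mVK by (simp add: is_module_def)
lemma act_mult: "x \<in> VK \<Longrightarrow> act (a * b) x = act a (act b x)"
  using mVK by (simp add: is_module_def)
lemma act_one: "x \<in> VK \<Longrightarrow> act 1 x = x"
  using mVK by (simp add: is_module_def)
lemma act_0v: "act a 0 = 0"
  using act_add[OF VK0 VK0, of a] by simp
lemma act_0s: "x \<in> VK \<Longrightarrow> act 0 x = 0"
  using act_addsc[of x 0 0] by simp
lemma act_negv: "x \<in> VK \<Longrightarrow> act a (- x) = - act a x"
proof -
  assume x: "x \<in> VK"
  have "act a x + act a (- x) = 0" using act_add[OF x VKneg[OF x], of a] by (simp add: act_0v)
  then show ?thesis by (metis add.commute neg_eq_iff_add_eq_0)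
qed
lemma act_diffv: "x \<in> VK \<Longrightarrow> y \<in> VK \<Longrightarrow> act a (x - y) = act a x - act a y"
  using act_add[OF _ VKneg, of x y a] act_negv[of y a] by simp
lemma act_diffsc: "x \<in> VK \<Longrightarrow> act (a - b) x = act a x - act b x"
  using act_addsc[of x "a - b" b] by (simp add: algebra_simps)
lemma act_negs: "x \<in> VK \<Longrightarrow> act (- 1) x = - x"
  using act_diffsc[of x 0 1] by (simp add: act_0s act_one)

lemma NinVK: "x \<in> N \<Longrightarrow> x \<in> VK" using NVK by auto

lemma smO_1: "x \<in> VK \<Longrightarrow> smO kap act 1 x = x"
  by (simp add: smO_def ofO_1 kap1 act_one)
lemma smO_0: "x \<in> VK \<Longrightarrow> smO kap act 0 x = 0"
  by (simp add: smO_def ofO_def Zero_fract_def[symmetric] kap0 act_0s)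
lemma smO_inv: assumes "x \<in> VK" "c \<noteq> 0"
  shows "act (kap (Fract 1 c)) (smO kap act c x) = x"
proof -
  have "Fract c c = 1" using assms(2) by (simp add: One_fract_def eq_fract)
  then have "kap (Fract 1 c) * kap (ofO c) = 1"
    by (simp add: kap1 kap_mult[symmetric] ofO_def)
  then show ?thesis using assms by (simp add: smO_def act_mult[symmetric] act_one)
qed

definition ksub :: "'m set \<Rightarrow> bool" where
  "ksub P \<longleftrightarrow> P \<subseteq> VK \<and> 0 \<in> P \<and> (\<forall>x\<in>P. \<forall>y\<in>P. x + y \<in> P) \<and> (\<forall>a. \<forall>x\<in>P. act a x \<in> P)"

lemma ksubD: assumes "ksub P"
  shows "P \<subseteq> VK" "0 \<in> P" "\<And>x y. x \<in> P \<Longrightarrow> y \<in> P \<Longrightarrow> x + y \<in> P"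
    "\<And>a x. x \<in> P \<Longrightarrow> act a x \<in> P"
  using assms by (auto simp: ksub_def)

lemma ksub_neg: "ksub P \<Longrightarrow> x \<in> P \<Longrightarrow> - x \<in> P"
  using ksubD[of P] act_negs[of x] by (metis subsetD)
lemma ksub_diff: "ksub P \<Longrightarrow> x \<in> P \<Longrightarrow> y \<in> P \<Longrightarrow> x - y \<in> P"
  using ksub_neg[of P y] ksubD(3)[of P x "- y"] by simp
lemma ksub_sm: "ksub P \<Longrightarrow> x \<in> P \<Longrightarrow> smO kap act c x \<in> P"
  unfolding smO_def by (rule ksubD(4))
lemma ksub_div: assumes "ksub P" "x \<in> VK" "c \<noteq> 0" "smO kap act c x \<in> P"
  shows "x \<in> P"
  using ksubD(4)[OF assms(1) assms(4), of "kap (Fract 1 c)"] smO_inv[OF assms(2,3)] by simp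

lemma ksub_gspan:
  assumes G: "G \<subseteq> VK" and Gc: "\<And>a g. g \<in> G \<Longrightarrow> act a g \<in> G"
  shows "ksub (gspan (+) 0 G)"
proof -
  have sub: "x \<in> VK" if "x \<in> gspan (+) 0 G" for x
    using that by induct (use G VK0 VKadd in auto)
  have ac: "act a x \<in> gspan (+) 0 G" if "x \<in> gspan (+) 0 G" for x a
    using that
  proof induct
    case gspan_zero then show ?case by (simp add: act_0v gspan.gspan_zero)
  next
    case (gspan_gen s) then show ?case by (simp add: Gc gspan.gspan_gen)
  next
    case (gspan_plus x y) then show ?case
      using sub act_add by (metis gspan.gspan_plus)
  qed
  show ?thesis unfolding ksub_def using sub ac by (auto intro: gspan.intros)
qed

lemma jac_left: "x \<in> jac UNIV \<Longrightarrow> r * x \<in> jac UNIV"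
  by (auto simp: jac_def max_left_ideal_def left_ideal_def)

lemma ksub_VK: "ksub VK"
  unfolding ksub_def using VK0 VKadd VKact by auto

lemma ksub_rad: "ksub (radK act VK i)"
proof (induct i)
  case 0 then show ?case by (simp add: radK_def ksub_VK)
next
  case (Suc i)
  show ?case unfolding radK_def radpow.simps
  proof (rule ksub_gspan)
    show "{act j m |j m. j \<in> jac UNIV \<and> m \<in> radpow (+) 0 act (jac UNIV) VK i} \<subseteq> VK"
      using Suc ksubD(1) VKact unfolding radK_def by blast
    fix a g assume "g \<in> {act j m |j m. j \<in> jac UNIV \<and> m \<in> radpow (+) 0 act (jac UNIV) VK i}"
    then obtain j m where "g = act j m" "j \<in> jac UNIV" "m \<in> radpow (+) 0 act (jac UNIV) VK i" by blast
    moreover then have "m \<in> VK" using Suc ksubD(1) unfolding radK_def by blast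
    ultimately have "act a g = act (a * j) m" "a * j \<in> jac UNIV" using jac_left act_mult by auto
    then show "act a g \<in> {act j m |j m. j \<in> jac UNIV \<and> m \<in> radpow (+) 0 act (jac UNIV) VK i}"
      using \<open>m \<in> radpow (+) 0 act (jac UNIV) VK i\<close> by blast
  qed
qed

lemma gspan_sub: "ksub P \<Longrightarrow> G \<subseteq> P \<Longrightarrow> gspan (+) 0 G \<subseteq> P"
proof
  fix x assume "ksub P" "G \<subseteq> P" "x \<in> gspan (+) 0 G"
  from \<open>x \<in> gspan (+) 0 G\<close> show "x \<in> P" by induct (use \<open>ksub P\<close> \<open>G \<subseteq> P\<close> in \<open>auto dest: ksubD\<close>)
qed

lemma rad_mono: "radK act VK (Suc i) \<subseteq> radK act VK i"
  unfolding radK_def radpow.simps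
  by (rule gspan_sub[OF ksub_rad[of i, unfolded radK_def]]) (use ksubD(4)[OF ksub_rad[of i, unfolded radK_def]] in blast)

lemma ksub_NP: "ksub (Nprime e Lam le act VK lam)"
  unfolding Nprime_def
proof (rule ksub_gspan)
  show "{act a w |a w. \<exists>\<mu>\<in>Lam. le lam \<mu> \<and> \<mu> \<noteq> lam \<and> w \<in> wsp act e VK \<mu>} \<subseteq> VK"
    by (auto simp: wsp_def VKact)
  fix b g assume "g \<in> {act a w |a w. \<exists>\<mu>\<in>Lam. le lam \<mu> \<and> \<mu> \<noteq> lam \<and> w \<in> wsp act e VK \<mu>}"
  then obtain a w \<mu> where "g = act a w" "\<mu>\<in>Lam" "le lam \<mu> \<and> \<mu> \<noteq> lam" "w \<in> wsp act e VK \<mu>" by blast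
  moreover then have "w \<in> VK" by (auto simp: wsp_def VKact)
  ultimately have "act b g = act (b * a) w" using act_mult by auto
  then show "act b g \<in> {act a w |a w. \<exists>\<mu>\<in>Lam. le lam \<mu> \<and> \<mu> \<noteq> lam \<and> w \<in> wsp act e VK \<mu>}"
    using \<open>\<mu>\<in>Lam\<close> \<open>le lam \<mu> \<and> \<mu> \<noteq> lam\<close> \<open>w \<in> wsp act e VK \<mu>\<close> by blast
qed

lemma ksub_setplus: assumes P: "ksub P" and Q: "ksub Q" shows "ksub (setplus (+) P Q)"
  unfolding ksub_def
proof (intro conjI ballI allI)
  show "setplus (+) P Q \<subseteq> VK"
  proof
    fix x assume "x \<in> setplus (+) P Q"
    then obtain p q where "p \<in> P" "q \<in> Q" "x = p + q" unfolding mem_setplus by (elim bexE)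
    moreover have "p \<in> VK" "q \<in> VK" using ksubD(1)[OF P] ksubD(1)[OF Q] calculation by (auto intro: subsetD)
    ultimately show "x \<in> VK" using VKadd by simp
  qed
  show "0 \<in> setplus (+) P Q" unfolding mem_setplus
    using ksubD(2)[OF P] ksubD(2)[OF Q] by (intro bexI) (rule add_0_left[symmetric])
  fix x y assume "x \<in> setplus (+) P Q" "y \<in> setplus (+) P Q"
  then obtain p q p' q' where "x = p + q" "y = p' + q'" "p \<in> P" "q \<in> Q" "p' \<in> P" "q' \<in> Q"
    unfolding mem_setplus by (elim bexE)
  moreover have "x + y = (p + p') + (q + q')" using calculation by (simp add: algebra_simps)
  moreover have "p + p' \<in> P" using ksubD(3)[OF P] calculation by blast
  moreover have "q + q' \<in> Q" using ksubD(3)[OF Q] calculation by blast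
  ultimately show "x + y \<in> setplus (+) P Q" unfolding mem_setplus by (intro bexI)
next
  fix a x assume "x \<in> setplus (+) P Q"
  then obtain p q where pq: "x = p + q" "p \<in> P" "q \<in> Q" unfolding mem_setplus by (elim bexE)
  have "p \<in> VK" "q \<in> VK" using ksubD(1)[OF P] ksubD(1)[OF Q] pq by (auto intro: subsetD)
  then have "act a x = act a p + act a q" using pq act_add by simp
  moreover have "act a p \<in> P" "act a q \<in> Q" using ksubD(4)[OF P] ksubD(4)[OF Q] pq by auto
  ultimately show "act a x \<in> setplus (+) P Q" unfolding mem_setplus by (intro bexI)
qed

lemma smO_fun: "smO kap act c = act (kap (ofO c))"
  by (rule ext) (simp add: smO_def)
lemma smO_addv: "x \<in> VK \<Longrightarrow> y \<in> VK \<Longrightarrow> smO kap act c (x + y) = smO kap act c x + smO kap act c y"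
  by (simp add: smO_def act_add)
lemma smO_comp: "x \<in> VK \<Longrightarrow> smO kap act c (smO kap act d x) = smO kap act (c * d) x"
  by (simp add: smO_def act_mult ofO_mult kap_mult)
lemma smO_diffsc: "x \<in> VK \<Longrightarrow> smO kap act (a - b) x = smO kap act a x - smO kap act b x"
  by (simp add: smO_def ofO_diff kap_diff act_diffsc)
lemma smO_VK: "x \<in> VK \<Longrightarrow> smO kap act c x \<in> VK"
  by (simp add: smO_def VKact)

lemma pi_act:
  assumes S: "S \<subseteq> VK" "0 \<in> S" "\<And>x y. x \<in> S \<Longrightarrow> y \<in> S \<Longrightarrow> x + y \<in> S" "\<And>x. x \<in> S \<Longrightarrow> act a x \<in> S"
    and x: "x \<in> VK"
  shows "qmap (+) S (act a) (coset (+) x S) = coset (+) (act a x) S"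
proof (rule set_eqI)
  fix y
  show "y \<in> qmap (+) S (act a) (coset (+) x S) \<longleftrightarrow> y \<in> coset (+) (act a x) S"
  proof
    assume "y \<in> qmap (+) S (act a) (coset (+) x S)"
    then obtain c t where c: "c \<in> coset (+) x S" and t: "t \<in> S" and y: "y = act a c + t"
      unfolding mem_qmap by (elim bexE)
    from c obtain s where s: "s \<in> S" and cs: "c = x + s" unfolding mem_coset_gen by (elim bexE)
    have sV: "s \<in> VK" using S(1) s by (rule subsetD)
    have "y = act a x + (act a s + t)" using y cs act_add[OF x sV, of a] by (simp add: add.assoc)
    moreover have "act a s + t \<in> S" using S(3)[OF S(4)[OF s] t] .
    ultimately show "y \<in> coset (+) (act a x) S" unfolding mem_coset_gen by (intro bexI)
  next
    assume "y \<in> coset (+) (act a x) S"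
    then obtain t where t: "t \<in> S" and y: "y = act a x + t" unfolding mem_coset_gen by (elim bexE)
    have "x + 0 \<in> coset (+) x S" unfolding mem_coset_gen using S(2) by (rule bexI[rotated]) (rule refl)
    moreover have "y = act a (x + 0) + t" using y by simp
    ultimately show "y \<in> qmap (+) S (act a) (coset (+) x S)" unfolding mem_qmap using t by (intro bexI)
  qed
qed

lemma pi_plus:
  assumes P: "ksub P"
  shows "setplus (+) (coset (+) x P) (coset (+) y P) = coset (+) (x + y) P"
proof (rule set_eqI)
  fix z
  show "z \<in> setplus (+) (coset (+) x P) (coset (+) y P) \<longleftrightarrow> z \<in> coset (+) (x + y) P"
  proof
    assume "z \<in> setplus (+) (coset (+) x P) (coset (+) y P)"
    then obtain p q where p: "p \<in> coset (+) x P" and q: "q \<in> coset (+) y P" and z: "z = p + q"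
      unfolding mem_setplus by (elim bexE)
    from p obtain t where t: "t \<in> P" "p = x + t" unfolding mem_coset_gen by (elim bexE)
    from q obtain t' where t': "t' \<in> P" "q = y + t'" unfolding mem_coset_gen by (elim bexE)
    have "z = (x + y) + (t + t')" using z t(2) t'(2) by (simp add: algebra_simps)
    moreover have "t + t' \<in> P" using ksubD(3)[OF P t(1) t'(1)] .
    ultimately show "z \<in> coset (+) (x + y) P" unfolding mem_coset_gen by (intro bexI)
  next
    assume "z \<in> coset (+) (x + y) P"
    then obtain t where t: "t \<in> P" and z: "z = (x + y) + t" unfolding mem_coset_gen by (elim bexE)
    have "x + t \<in> coset (+) x P" unfolding mem_coset_gen using t by (rule bexI[rotated]) (rule refl)
    moreover have "y + 0 \<in> coset (+) y P" unfolding mem_coset_gen using ksubD(2)[OF P] by (rule bexI[rotated]) (rule refl)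
    moreover have "z = (x + t) + (y + 0)" using z by (simp add: algebra_simps)
    ultimately show "z \<in> setplus (+) (coset (+) x P) (coset (+) y P)" unfolding mem_setplus by (intro bexI)
  qed
qed

lemma pi_zero: "coset (+) (0::'m) P = P"
  unfolding coset_def by auto

lemma gspan_pi:
  assumes P: "ksub P"
  shows "gspan (setplus (+)) P ((\<lambda>x. coset (+) x P) ` G) = (\<lambda>x. coset (+) x P) ` gspan (+) 0 G"
proof
  show "gspan (setplus (+)) P ((\<lambda>x. coset (+) x P) ` G) \<subseteq> (\<lambda>x. coset (+) x P) ` gspan (+) 0 G"
  proof
    fix X assume "X \<in> gspan (setplus (+)) P ((\<lambda>x. coset (+) x P) ` G)"
    then show "X \<in> (\<lambda>x. coset (+) x P) ` gspan (+) 0 G"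
    proof induct
      case gspan_zero
      have "P = coset (+) 0 P" by (simp only: pi_zero)
      moreover have "(0::'m) \<in> gspan (+) 0 G" by (rule gspan.gspan_zero)
      ultimately show ?case by (rule image_eqI)
    next
      case (gspan_gen s)
      then obtain g where sg: "s = coset (+) g P" and "g \<in> G" by (auto simp only: image_iff)
      have "g \<in> gspan (+) 0 G" using \<open>g \<in> G\<close> by (rule gspan.gspan_gen)
      with sg show ?case by (rule image_eqI)
    next
      case (gspan_plus x y)
      from gspan_plus(2) obtain a where "x = coset (+) a P" "a \<in> gspan (+) 0 G" by (auto simp only: image_iff)
      moreover from gspan_plus(4) obtain b where "y = coset (+) b P" "b \<in> gspan (+) 0 G" by (auto simp only: image_iff)
      ultimately have "x = coset (+) a P" "y = coset (+) b P" "a \<in> gspan (+) 0 G" "b \<in> gspan (+) 0 G" by auto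
      then have "setplus (+) x y = coset (+) (a + b) P" using pi_plus[OF P, of a b] by simp
      moreover have "a + b \<in> gspan (+) 0 G" using \<open>a \<in> _\<close> \<open>b \<in> _\<close> by (rule gspan.gspan_plus)
      ultimately show ?case by (rule image_eqI)
    qed
  qed
next
  show "(\<lambda>x. coset (+) x P) ` gspan (+) 0 G \<subseteq> gspan (setplus (+)) P ((\<lambda>x. coset (+) x P) ` G)"
  proof
    fix X assume "X \<in> (\<lambda>x. coset (+) x P) ` gspan (+) 0 G"
    then obtain x where X: "X = coset (+) x P" and x: "x \<in> gspan (+) 0 G" by blast
    from x have "coset (+) x P \<in> gspan (setplus (+)) P ((\<lambda>x. coset (+) x P) ` G)"
    proof induct
      case gspan_zero then show ?case by (simp only: pi_zero gspan.gspan_zero)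
    next
      case (gspan_gen s)
      then have "coset (+) s P \<in> (\<lambda>x. coset (+) x P) ` G" by (rule imageI)
      then show ?case by (rule gspan.gspan_gen)
    next
      case (gspan_plus x y) show ?case unfolding pi_plus[OF P, symmetric] by (rule gspan.gspan_plus[OF gspan_plus(2) gspan_plus(4)])
    qed
    then show "X \<in> gspan (setplus (+)) P ((\<lambda>x. coset (+) x P) ` G)" using X by simp
  qed
qed

lemma radQ:
  assumes P: "ksub P"
  shows "radpow (setplus (+)) P (\<lambda>a. qmap (+) P (act a)) (jac UNIV) (quot (+) VK P) j
     = (\<lambda>x. coset (+) x P) ` radK act VK j"
proof (induct j)
  case 0 show ?case by (simp only: radK_def quot_def radpow.simps)
next
  case (Suc j)
  let ?R = "radpow (+) 0 act (jac UNIV) VK j"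
  let ?pi = "\<lambda>x. coset (+) x P"
  have IH: "radpow (setplus (+)) P (\<lambda>a. qmap (+) P (act a)) (jac UNIV) (quot (+) VK P) j = ?pi ` ?R"
    using Suc by (simp only: radK_def)
  have RVK: "?R \<subseteq> VK" using ksubD(1)[OF ksub_rad[of j]] by (simp only: radK_def)
  have pa: "qmap (+) P (act a) (coset (+) m P) = coset (+) (act a m) P" if "m \<in> VK" for a m
    by (rule pi_act[OF ksubD(1,2,3,4)[OF P] that])
  have pa': "\<And>a m. m \<in> ?R \<Longrightarrow> qmap (+) P (act a) (coset (+) m P) = coset (+) (act a m) P"
    using pa RVK by blast
  have seteq: "{qmap (+) P (act a) C | a C. a \<in> jac UNIV \<and> C \<in> ?pi ` ?R}
      = ?pi ` {act a m | a m. a \<in> jac UNIV \<and> m \<in> ?R}"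
  proof (rule set_eqI)
    fix Y
    have "Y \<in> {qmap (+) P (act a) C | a C. a \<in> jac UNIV \<and> C \<in> ?pi ` ?R} \<longleftrightarrow>
        (\<exists>a m. a \<in> jac UNIV \<and> m \<in> ?R \<and> Y = qmap (+) P (act a) (coset (+) m P))"
      by auto
    also have "\<dots> \<longleftrightarrow> (\<exists>a m. a \<in> jac UNIV \<and> m \<in> ?R \<and> Y = coset (+) (act a m) P)"
    proof
      assume "\<exists>a m. a \<in> jac UNIV \<and> m \<in> ?R \<and> Y = qmap (+) P (act a) (coset (+) m P)"
      then obtain a m where "a \<in> jac UNIV" "m \<in> ?R" "Y = qmap (+) P (act a) (coset (+) m P)" by blast
      then show "\<exists>a m. a \<in> jac UNIV \<and> m \<in> ?R \<and> Y = coset (+) (act a m) P"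
        using pa' by (intro exI[of _ a] exI[of _ m]) simp
    next
      assume "\<exists>a m. a \<in> jac UNIV \<and> m \<in> ?R \<and> Y = coset (+) (act a m) P"
      then obtain a m where "a \<in> jac UNIV" "m \<in> ?R" "Y = coset (+) (act a m) P" by blast
      then show "\<exists>a m. a \<in> jac UNIV \<and> m \<in> ?R \<and> Y = qmap (+) P (act a) (coset (+) m P)"
        using pa' by (intro exI[of _ a] exI[of _ m]) simp
    qed
    also have "\<dots> \<longleftrightarrow> Y \<in> ?pi ` {act a m | a m. a \<in> jac UNIV \<and> m \<in> ?R}"
      by auto
    finally show "Y \<in> {qmap (+) P (act a) C | a C. a \<in> jac UNIV \<and> C \<in> ?pi ` ?R} \<longleftrightarrow>
        Y \<in> ?pi ` {act a m | a m. a \<in> jac UNIV \<and> m \<in> ?R}" .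
  qed
  have "radpow (setplus (+)) P (\<lambda>a. qmap (+) P (act a)) (jac UNIV) (quot (+) VK P) (Suc j)
      = gspan (setplus (+)) P {qmap (+) P (act a) C | a C. a \<in> jac UNIV \<and> C \<in> ?pi ` ?R}"
    by (simp only: radpow.simps IH)
  also have "\<dots> = gspan (setplus (+)) P (?pi ` {act a m | a m. a \<in> jac UNIV \<and> m \<in> ?R})"
    by (simp only: seteq)
  also have "\<dots> = ?pi ` gspan (+) 0 {act a m | a m. a \<in> jac UNIV \<and> m \<in> ?R}"
    by (rule gspan_pi[OF P])
  also have "\<dots> = ?pi ` radK act VK (Suc j)" by (simp only: radK_def radpow.simps)
  finally show ?case .
qed

lemma coset_eq:
  fixes S :: "'b::ab_group_add set"
  assumes "0 \<in> S" "\<And>a b. a \<in> S \<Longrightarrow> b \<in> S \<Longrightarrow> a + b \<in> S" "\<And>a. a \<in> S \<Longrightarrow> - a \<in> S"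
  shows "coset (+) x S = coset (+) y S \<longleftrightarrow> x - y \<in> S"
proof
  assume e: "coset (+) x S = coset (+) y S"
  have "x = x + 0" by simp
  then have "x \<in> coset (+) x S" using assms(1) unfolding coset_def by blast
  then have "x \<in> coset (+) y S" using e by simp
  then obtain t where "x = y + t" "t \<in> S" unfolding coset_def by blast
  then show "x - y \<in> S" by simp
next
  assume d: "x - y \<in> S"
  have sub: "coset (+) a S \<subseteq> coset (+) b S" if "a - b \<in> S" for a b :: 'b
  proof
    fix z assume "z \<in> coset (+) a S"
    then obtain t where z: "z = a + t" "t \<in> S" unfolding coset_def by blast
    then have "z = b + ((a - b) + t)" by simp
    moreover have "(a - b) + t \<in> S" using assms(2) that z(2) .
    ultimately show "z \<in> coset (+) b S" unfolding coset_def by blast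
  qed
  have "y - x \<in> S" using assms(3)[OF d] by simp
  then show "coset (+) x S = coset (+) y S" using sub d by blast
qed

lemma pi_inter:
  assumes P: "ksub P" and R: "ksub R"
  shows "(\<lambda>x. coset (+) x P) ` N \<inter> (\<lambda>x. coset (+) x P) ` R = (\<lambda>x. coset (+) x P) ` (N \<inter> setplus (+) R P)"
proof -
  have ce: "coset (+) x P = coset (+) y P \<longleftrightarrow> x - y \<in> P" for x y
  proof (rule coset_eq)
    show "0 \<in> P" by (rule ksubD(2)[OF P])
    show "\<And>a b. a \<in> P \<Longrightarrow> b \<in> P \<Longrightarrow> a + b \<in> P" by (rule ksubD(3)[OF P])
    show "\<And>a. a \<in> P \<Longrightarrow> - a \<in> P" by (rule ksub_neg[OF P])
  qed
  show ?thesis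
  proof
    show "(\<lambda>x. coset (+) x P) ` N \<inter> (\<lambda>x. coset (+) x P) ` R \<subseteq> (\<lambda>x. coset (+) x P) ` (N \<inter> setplus (+) R P)"
    proof
      fix X assume X: "X \<in> (\<lambda>x. coset (+) x P) ` N \<inter> (\<lambda>x. coset (+) x P) ` R"
      then obtain x where Xx: "X = coset (+) x P" and x: "x \<in> N" by (auto simp only: image_iff Int_iff)
      from X obtain y where Xy: "X = coset (+) y P" and y: "y \<in> R" by (auto simp only: image_iff Int_iff)
      have "coset (+) x P = coset (+) y P" using Xx Xy by (simp only:)
      then have "x - y \<in> P" by (rule ce[THEN iffD1])
      moreover have "x = y + (x - y)" by simp
      ultimately have "x \<in> setplus (+) R P" unfolding setplus_def using y by blast
      with x have "x \<in> N \<inter> setplus (+) R P" by (rule IntI)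
      with Xx show "X \<in> (\<lambda>x. coset (+) x P) ` (N \<inter> setplus (+) R P)" by (rule image_eqI)
    qed
  next
    show "(\<lambda>x. coset (+) x P) ` (N \<inter> setplus (+) R P) \<subseteq> (\<lambda>x. coset (+) x P) ` N \<inter> (\<lambda>x. coset (+) x P) ` R"
    proof
      fix X assume "X \<in> (\<lambda>x. coset (+) x P) ` (N \<inter> setplus (+) R P)"
      then obtain x where Xx: "X = coset (+) x P" and x: "x \<in> N" and xs: "x \<in> setplus (+) R P"
        by (auto simp only: image_iff Int_iff)
      from xs obtain r p where "x = r + p" "r \<in> R" "p \<in> P" unfolding setplus_def by blast
      then have "x - r \<in> P" by simp
      then have "coset (+) x P = coset (+) r P" by (rule ce[THEN iffD2])
      then have Xr: "X = coset (+) r P" using Xx by (simp only:)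
      have "X \<in> (\<lambda>x. coset (+) x P) ` N" using Xx x by (rule image_eqI)
      moreover have "X \<in> (\<lambda>x. coset (+) x P) ` R" using Xr \<open>r \<in> R\<close> by (rule image_eqI)
      ultimately show "X \<in> (\<lambda>x. coset (+) x P) ` N \<inter> (\<lambda>x. coset (+) x P) ` R" by (rule IntI)
    qed
  qed
qed

lemma cosQ:
  assumes P: "ksub P"
  shows "coset (setplus (+)) (coset (+) x P) ((\<lambda>x. coset (+) x P) ` W) = (\<lambda>x. coset (+) x P) ` coset (+) x W"
proof (rule set_eqI)
  fix Y
  show "Y \<in> coset (setplus (+)) (coset (+) x P) ((\<lambda>x. coset (+) x P) ` W) \<longleftrightarrow>
      Y \<in> (\<lambda>x. coset (+) x P) ` coset (+) x W"
  proof
    assume "Y \<in> coset (setplus (+)) (coset (+) x P) ((\<lambda>x. coset (+) x P) ` W)"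
    then obtain t where t: "t \<in> (\<lambda>x. coset (+) x P) ` W" and Y: "Y = setplus (+) (coset (+) x P) t"
      unfolding mem_coset_gen by (elim bexE)
    from t obtain w where w: "w \<in> W" and tw: "t = coset (+) w P" unfolding image_iff by (elim bexE)
    have "Y = coset (+) (x + w) P" using Y tw pi_plus[OF P] by (simp only:)
    moreover have "x + w \<in> coset (+) x W" unfolding mem_coset_gen using w by (rule bexI[rotated]) (rule refl)
    ultimately show "Y \<in> (\<lambda>x. coset (+) x P) ` coset (+) x W" by (rule image_eqI)
  next
    assume "Y \<in> (\<lambda>x. coset (+) x P) ` coset (+) x W"
    then obtain y where y: "y \<in> coset (+) x W" and Y: "Y = coset (+) y P" unfolding image_iff by (elim bexE)
    from y obtain w where w: "w \<in> W" and yw: "y = x + w" unfolding mem_coset_gen by (elim bexE)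
    have "Y = setplus (+) (coset (+) x P) (coset (+) w P)" using Y yw pi_plus[OF P] by (simp only:)
    moreover have "coset (+) w P \<in> (\<lambda>x. coset (+) x P) ` W" using w by (rule imageI)
    ultimately show "Y \<in> coset (setplus (+)) (coset (+) x P) ((\<lambda>x. coset (+) x P) ` W)"
      unfolding mem_coset_gen by (intro bexI)
  qed
qed

lemma mem_coset: "y \<in> coset (+) x W \<longleftrightarrow> (\<exists>w\<in>W. y = x + w)"
  by (auto simp: coset_def)

lemma qmapQ:
  assumes P: "ksub P" and W: "W \<subseteq> VK" "0 \<in> W" "\<And>x y. x \<in> W \<Longrightarrow> y \<in> W \<Longrightarrow> x + y \<in> W"
    "\<And>x. x \<in> W \<Longrightarrow> act a x \<in> W" and x: "x \<in> VK"
  shows "qmap (setplus (+)) ((\<lambda>x. coset (+) x P) ` W) (qmap (+) P (act a)) ((\<lambda>x. coset (+) x P) ` coset (+) x W)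
     = (\<lambda>x. coset (+) x P) ` coset (+) (act a x) W"
proof -
  have pa: "qmap (+) P (act a) (coset (+) y P) = coset (+) (act a y) P" if "y \<in> VK" for y
    using pi_act[OF ksubD(1,2,3,4)[OF P] that] by blast
  show ?thesis
  proof
    show "qmap (setplus (+)) ((\<lambda>x. coset (+) x P) ` W) (qmap (+) P (act a)) ((\<lambda>x. coset (+) x P) ` coset (+) x W)
      \<subseteq> (\<lambda>x. coset (+) x P) ` coset (+) (act a x) W"
    proof
      fix Y assume "Y \<in> qmap (setplus (+)) ((\<lambda>x. coset (+) x P) ` W) (qmap (+) P (act a)) ((\<lambda>x. coset (+) x P) ` coset (+) x W)"
      then have "\<exists>C t. Y = setplus (+) (qmap (+) P (act a) C) t \<and>
        C \<in> (\<lambda>x. coset (+) x P) ` coset (+) x W \<and> t \<in> (\<lambda>x. coset (+) x P) ` W"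
        unfolding qmap_def[of "setplus (+)"] by (simp only: mem_Collect_eq)
      then obtain C t where Y: "Y = setplus (+) (qmap (+) P (act a) C) t"
        and C: "C \<in> (\<lambda>x. coset (+) x P) ` coset (+) x W" and t: "t \<in> (\<lambda>x. coset (+) x P) ` W"
        by (elim exE conjE)
      from C obtain y where Cy: "C = coset (+) y P" and y: "y \<in> coset (+) x W" by (auto simp only: image_iff)
      from y obtain w where yw: "y = x + w" and w: "w \<in> W" by (auto simp only: mem_coset)
      from t obtain w' where tw: "t = coset (+) w' P" and w': "w' \<in> W" by (auto simp only: image_iff)
      have wV: "w \<in> VK" using W(1) w by blast
      have "x + w \<in> VK" using x wV by (rule VKadd)
      then have "Y = setplus (+) (coset (+) (act a (x + w)) P) (coset (+) w' P)"
        using Y Cy yw tw pa by simp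
      also have "\<dots> = coset (+) (act a (x + w) + w') P" by (rule pi_plus[OF P])
      finally have Y1: "Y = coset (+) (act a (x + w) + w') P" .
      have eq: "act a (x + w) + w' = act a x + (act a w + w')"
        using act_add[OF x wV, of a] by (simp add: add.assoc)
      have "Y = coset (+) (act a x + (act a w + w')) P" using Y1 by (simp only: eq)
      moreover have "act a w + w' \<in> W" using W(3)[OF W(4)[OF w] w'] .
      then have "act a x + (act a w + w') \<in> coset (+) (act a x) W" by (auto simp only: mem_coset)
      ultimately show "Y \<in> (\<lambda>x. coset (+) x P) ` coset (+) (act a x) W" by (rule image_eqI)
    qed
  next
    show "(\<lambda>x. coset (+) x P) ` coset (+) (act a x) W \<subseteq>
      qmap (setplus (+)) ((\<lambda>x. coset (+) x P) ` W) (qmap (+) P (act a)) ((\<lambda>x. coset (+) x P) ` coset (+) x W)"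
    proof
      fix Y assume "Y \<in> (\<lambda>x. coset (+) x P) ` coset (+) (act a x) W"
      then obtain y where Yy: "Y = coset (+) y P" and y: "y \<in> coset (+) (act a x) W" by (auto simp only: image_iff)
      from y obtain w where yw: "y = act a x + w" and w: "w \<in> W" by (auto simp only: mem_coset)
      have "Y = setplus (+) (coset (+) (act a x) P) (coset (+) w P)"
        using Yy yw pi_plus[OF P] by simp
      also have "\<dots> = setplus (+) (qmap (+) P (act a) (coset (+) x P)) (coset (+) w P)"
        using pa[OF x] by simp
      finally have Y: "Y = setplus (+) (qmap (+) P (act a) (coset (+) x P)) (coset (+) w P)" .
      have "x \<in> coset (+) x W" using W(2) by (auto simp only: mem_coset) (rule bexI[of _ 0], simp_all)
      then have c1: "coset (+) x P \<in> (\<lambda>x. coset (+) x P) ` coset (+) x W" by (rule imageI)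
      have c2: "coset (+) w P \<in> (\<lambda>x. coset (+) x P) ` W" using w by (rule imageI)
      show "Y \<in> qmap (setplus (+)) ((\<lambda>x. coset (+) x P) ` W) (qmap (+) P (act a)) ((\<lambda>x. coset (+) x P) ` coset (+) x W)"
        unfolding qmap_def[of "setplus (+)"] mem_Collect_eq using Y c1 c2 by (intro exI conjI)
    qed
  qed
qed

end



context ctx begin

lemma abs_prim:
  fixes phi :: "'m \<Rightarrow> 'q" and F :: "'o \<Rightarrow> 'q \<Rightarrow> 'q" and W D :: "'m set"
  assumes WN: "W \<subseteq> N" and W0: "0 \<in> W"
    and Wsm: "\<And>x c. x \<in> W \<Longrightarrow> smO kap act c x \<in> W"
    and phi: "\<And>x y. x \<in> N \<Longrightarrow> y \<in> N \<Longrightarrow> phi x = phi y \<longleftrightarrow> x - y \<in> W"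
    and DN: "D \<subseteq> N" and F: "\<And>c x. x \<in> D \<Longrightarrow> F c (phi x) = phi (smO kap act c x)" and v: "v \<in> N"
  shows "({phi (smO kap act c v) | c. True} \<noteq> {phi 0} \<and> pure_in F (phi ` D) {phi (smO kap act c v) | c. True}) \<longleftrightarrow>
     (v \<notin> W \<and> (\<forall>c. c \<noteq> 0 \<longrightarrow> (\<forall>x\<in>D. smO kap act c x \<in> setplus (+) {smO kap act d v | d. True} W
         \<longrightarrow> x \<in> setplus (+) {smO kap act d v | d. True} W)))"
proof -
  let ?img = "{phi (smO kap act c v) | c. True}"
  let ?SP = "setplus (+) {smO kap act d v | d. True} W"
  have vV: "v \<in> VK" using v NVK by blast
  have key: "phi y \<in> ?img \<longleftrightarrow> y \<in> ?SP" if y: "y \<in> N" for y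
  proof
    assume "phi y \<in> ?img"
    then obtain d where d: "phi y = phi (smO kap act d v)" by blast
    have dN: "smO kap act d v \<in> N" using Nsm[OF v] .
    have "y - smO kap act d v \<in> W" using phi[OF y dN] d by simp
    moreover have "y = smO kap act d v + (y - smO kap act d v)" by simp
    moreover have "smO kap act d v \<in> {smO kap act d v | d. True}" by blast
    ultimately show "y \<in> ?SP" unfolding mem_setplus by (intro bexI)
  next
    assume "y \<in> ?SP"
    then obtain p w where p: "p \<in> {smO kap act d v | d. True}" and w: "w \<in> W" and yp: "y = p + w"
      unfolding mem_setplus by (elim bexE)
    from p obtain d where pd: "p = smO kap act d v" by blast
    have dN: "smO kap act d v \<in> N" using Nsm[OF v] .
    have "y - smO kap act d v \<in> W" using yp pd w by simp
    then have "phi y = phi (smO kap act d v)" using phi[OF y dN] by simp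
    then show "phi y \<in> ?img" by blast
  qed
  have n1: "?img \<noteq> {phi 0} \<longleftrightarrow> v \<notin> W"
  proof
    assume ne: "?img \<noteq> {phi 0}"
    show "v \<notin> W"
    proof
      assume vW: "v \<in> W"
      have "phi (smO kap act c v) = phi 0" for c
        using phi[OF Nsm[OF v] N0] Wsm[OF vW] by simp
      then have a: "\<And>c. phi (smO kap act c v) = phi 0" .
      have "?img \<subseteq> {phi 0}" using a by blast
      moreover have "phi 0 \<in> ?img" using a[of 0] by (metis (mono_tags, lifting) mem_Collect_eq)
      ultimately have "?img = {phi 0}" by blast
      with ne show False by simp
    qed
  next
    assume nv: "v \<notin> W"
    show "?img \<noteq> {phi 0}"
    proof
      assume e: "?img = {phi 0}"
      have "phi (smO kap act 1 v) \<in> ?img" by blast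
      then have "phi (smO kap act 1 v) \<in> {phi 0}" using e by (simp only:)
      then have "phi v = phi 0" using smO_1[OF vV] by simp
      then have "v - 0 \<in> W" using phi[OF v N0] by simp
      with nv show False by simp
    qed
  qed
  have n2: "pure_in F (phi ` D) ?img \<longleftrightarrow>
      (\<forall>c. c \<noteq> 0 \<longrightarrow> (\<forall>x\<in>D. smO kap act c x \<in> ?SP \<longrightarrow> x \<in> ?SP))"
  proof -
    have "pure_in F (phi ` D) ?img \<longleftrightarrow> (\<forall>c. c \<noteq> 0 \<longrightarrow> (\<forall>x\<in>D. F c (phi x) \<in> ?img \<longrightarrow> phi x \<in> ?img))"
      unfolding pure_in_def by blast
    also have "\<dots> \<longleftrightarrow> (\<forall>c. c \<noteq> 0 \<longrightarrow> (\<forall>x\<in>D. smO kap act c x \<in> ?SP \<longrightarrow> x \<in> ?SP))"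
    proof -
      have "(F c (phi x) \<in> ?img \<longrightarrow> phi x \<in> ?img) \<longleftrightarrow> (smO kap act c x \<in> ?SP \<longrightarrow> x \<in> ?SP)"
        if x: "x \<in> D" for c x
      proof -
        have xN: "x \<in> N" using x DN by blast
        show ?thesis using F[OF x, of c] key[OF xN] key[OF Nsm[OF xN, of c]] by simp
      qed
      then show ?thesis by blast
    qed
    finally show ?thesis .
  qed
  show ?thesis using n1 n2 by simp
qed


lemma pure_in_iff: "pure_in (smO kap act) N X \<longleftrightarrow> (\<forall>c. c \<noteq> 0 \<longrightarrow> (\<forall>x\<in>N. smO kap act c x \<in> X \<longrightarrow> x \<in> X))"
  unfolding pure_in_def by blast

lemma partA:
  assumes P: "ksub P" and v: "v \<in> N"
  shows "(let S = N \<inter> P; img = {coset (+) (smO kap act c0 v) S | c0. True}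
          in img \<noteq> {coset (+) 0 S} \<and> pure_in (\<lambda>c0. qmap (+) S (smO kap act c0)) (quot (+) N S) img)
     \<longleftrightarrow> (v \<notin> N \<inter> P \<and> pure_in (smO kap act) N (setplus (+) {smO kap act c0 v | c0. True} (N \<inter> P)))"
proof -
  let ?S = "N \<inter> P"
  have SV: "?S \<subseteq> VK" using NVK by blast
  have S0: "0 \<in> ?S" using N0 ksubD(2)[OF P] by blast
  have Sadd: "\<And>x y. x \<in> ?S \<Longrightarrow> y \<in> ?S \<Longrightarrow> x + y \<in> ?S" using Nadd ksubD(3)[OF P] by blast
  have Sneg: "\<And>x. x \<in> ?S \<Longrightarrow> - x \<in> ?S" using Nneg ksub_neg[OF P] by blast
  have Ssm: "\<And>x c. x \<in> ?S \<Longrightarrow> smO kap act c x \<in> ?S" using Nsm ksub_sm[OF P] by blast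
  have Sact: "\<And>x. x \<in> ?S \<Longrightarrow> act (kap (ofO c)) x \<in> ?S" for c using Ssm[of _ c] by (simp add: smO_def)
  have phi: "\<And>x y. x \<in> N \<Longrightarrow> y \<in> N \<Longrightarrow> coset (+) x ?S = coset (+) y ?S \<longleftrightarrow> x - y \<in> ?S"
    by (rule coset_eq[OF S0 Sadd Sneg])
  have F: "qmap (+) ?S (smO kap act c) (coset (+) x ?S) = coset (+) (smO kap act c x) ?S"
    if "x \<in> N" for c x
  proof -
    have xv: "x \<in> VK" using that NVK by blast
    have pa: "qmap (+) ?S (act (kap (ofO c))) (coset (+) x ?S) = coset (+) (act (kap (ofO c)) x) ?S"
      by (rule pi_act[OF SV S0 Sadd Sact xv])
    then show ?thesis by (simp only: smO_fun)
  qed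
  note AP = abs_prim[where W="?S" and phi="\<lambda>x. coset (+) x ?S" and D=N
      and F="\<lambda>c0. qmap (+) ?S (smO kap act c0)" and v=v, OF _ S0 Ssm phi _ F v]
  show ?thesis unfolding Let_def quot_def pure_in_iff using AP by blast
qed

lemma phiQ:
  assumes P: "ksub P" and V: "ksub V" and PV: "P \<subseteq> V" and x: "x \<in> N" and y: "y \<in> N"
  shows "(\<lambda>x. coset (+) x P) ` coset (+) x (N \<inter> V) = (\<lambda>x. coset (+) x P) ` coset (+) y (N \<inter> V)
    \<longleftrightarrow> x - y \<in> N \<inter> V"
proof
  let ?W = "N \<inter> V"
  have ceP: "coset (+) a P = coset (+) b P \<longleftrightarrow> a - b \<in> P" for a b
    by (rule coset_eq) (auto intro: ksubD(2,3)[OF P] ksub_neg[OF P])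
  assume e: "(\<lambda>x. coset (+) x P) ` coset (+) x ?W = (\<lambda>x. coset (+) x P) ` coset (+) y ?W"
  have "x + 0 \<in> coset (+) x ?W" unfolding mem_coset_gen using N0 ksubD(2)[OF V] by (intro bexI) auto
  then have "coset (+) x P \<in> (\<lambda>x. coset (+) x P) ` coset (+) x ?W" by (metis add_0_right imageI)
  then have "coset (+) x P \<in> (\<lambda>x. coset (+) x P) ` coset (+) y ?W" using e by (simp only:)
  then obtain z where z: "z \<in> coset (+) y ?W" and xz: "coset (+) x P = coset (+) z P"
    unfolding image_iff by (elim bexE)
  from z obtain w where w: "w \<in> ?W" and zw: "z = y + w" unfolding mem_coset_gen by (elim bexE)
  have "x - z \<in> V" using ceP xz PV by blast
  moreover have "w \<in> V" using w by blast
  ultimately have "(x - z) + w \<in> V" by (rule ksubD(3)[OF V])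
  moreover have "(x - z) + w = x - y" using zw by simp
  ultimately have "x - y \<in> V" by simp
  moreover have "x - y \<in> N" using Nadd[OF x Nneg[OF y]] by simp
  ultimately show "x - y \<in> ?W" by blast
next
  let ?W = "N \<inter> V"
  assume d: "x - y \<in> ?W"
  have "coset (+) x ?W = coset (+) y ?W"
  proof (rule coset_eq[THEN iffD2])
    show "0 \<in> ?W" using N0 ksubD(2)[OF V] by blast
    show "\<And>a b. a \<in> ?W \<Longrightarrow> b \<in> ?W \<Longrightarrow> a + b \<in> ?W" using Nadd ksubD(3)[OF V] by blast
    show "\<And>a. a \<in> ?W \<Longrightarrow> - a \<in> ?W" using Nneg ksub_neg[OF V] by blast
    show "x - y \<in> ?W" by (rule d)
  qed
  then show "(\<lambda>x. coset (+) x P) ` coset (+) x ?W = (\<lambda>x. coset (+) x P) ` coset (+) y ?W" by simp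
qed


lemma partB_i:
  assumes P: "ksub P" and v: "v \<in> N"
  shows "(v \<in> N \<inter> radK act VK i \<and>
   (let plQ = setplus (+); actQ = (\<lambda>a. qmap (+) P (act a)); smQ = (\<lambda>c0. qmap (+) P (smO kap act c0));
        QK = quot (+) VK P; Q = quot (+) N P; radtQ = (\<lambda>j. Q \<inter> radpow plQ P actQ (jac UNIV) QK j);
        T = radtQ (Suc i); grQ = quot plQ (radtQ i) T; img = {coset plQ (smQ c0 (coset (+) v P)) T | c0. True}
    in img \<noteq> {coset plQ P T} \<and> pure_in (\<lambda>c0. qmap plQ T (smQ c0)) grQ img))
  \<longleftrightarrow> (v \<in> N \<inter> radK act VK i \<and> v \<notin> N \<inter> setplus (+) (radK act VK (Suc i)) P \<and>
     pure_in (smO kap act) N (setplus (+) {smO kap act c0 v | c0. True} (N \<inter> setplus (+) (radK act VK (Suc i)) P)))"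
proof (cases "v \<in> radK act VK i")
  case False then show ?thesis by simp
next
  case vR: True
  let ?pi = "\<lambda>x. coset (+) x P"
  let ?R = "radK act VK (Suc i)" let ?Ri = "radK act VK i"
  let ?V = "setplus (+) ?R P" let ?Vi = "setplus (+) ?Ri P"
  let ?W = "N \<inter> ?V" let ?Wi = "N \<inter> ?Vi"
  have V: "ksub ?V" by (rule ksub_setplus[OF ksub_rad P])
  have Vi: "ksub ?Vi" by (rule ksub_setplus[OF ksub_rad P])
  have PV: "P \<subseteq> ?V"
  proof
    fix p assume "p \<in> P"
    moreover have "p = 0 + p" by simp
    moreover have "0 \<in> ?R" by (rule ksubD(2)[OF ksub_rad])
    ultimately show "p \<in> ?V" unfolding mem_setplus by (intro bexI)
  qed
  have RRi: "?Ri \<subseteq> ?Vi"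
  proof
    fix p assume "p \<in> ?Ri"
    moreover have "p = p + 0" by simp
    moreover have "0 \<in> P" by (rule ksubD(2)[OF P])
    ultimately show "p \<in> ?Vi" unfolding mem_setplus by (intro bexI)
  qed
  have VVi: "?V \<subseteq> ?Vi"
  proof
    fix z assume "z \<in> ?V"
    then obtain r p where "r \<in> ?R" "p \<in> P" "z = r + p" unfolding mem_setplus by (elim bexE)
    moreover have "r \<in> ?Ri" using rad_mono calculation(1) by blast
    ultimately show "z \<in> ?Vi" unfolding mem_setplus by (intro bexI)
  qed
  have WV: "?W \<subseteq> VK" using NVK by blast
  have W0: "0 \<in> ?W" using N0 ksubD(2)[OF V] by blast
  have Wadd: "\<And>x y. x \<in> ?W \<Longrightarrow> y \<in> ?W \<Longrightarrow> x + y \<in> ?W" using Nadd ksubD(3)[OF V] by blast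
  have Wsm: "\<And>x c. x \<in> ?W \<Longrightarrow> smO kap act c x \<in> ?W" using Nsm ksub_sm[OF V] by blast
  have Wact: "\<And>x. x \<in> ?W \<Longrightarrow> act (kap (ofO c)) x \<in> ?W" for c using Wsm[of _ c] by (simp add: smO_def)
  have e1: "quot (+) N P \<inter> radpow (setplus (+)) P (\<lambda>a. qmap (+) P (act a)) (jac UNIV) (quot (+) VK P) j
      = ?pi ` (N \<inter> setplus (+) (radK act VK j) P)" for j
  proof -
    have "quot (+) N P \<inter> radpow (setplus (+)) P (\<lambda>a. qmap (+) P (act a)) (jac UNIV) (quot (+) VK P) j
        = quot (+) N P \<inter> ?pi ` radK act VK j" by (simp only: radQ[OF P])
    also have "\<dots> = ?pi ` (N \<inter> setplus (+) (radK act VK j) P)"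
      unfolding quot_def by (rule pi_inter[OF P ksub_rad])
    finally show ?thesis .
  qed
  have e2: "qmap (+) P (smO kap act c) (coset (+) v P) = coset (+) (smO kap act c v) P" for c
  proof -
    have vV: "v \<in> VK" using v NVK by blast
    have Pa: "\<And>x. x \<in> P \<Longrightarrow> act (kap (ofO c)) x \<in> P" by (rule ksubD(4)[OF P])
    have "qmap (+) P (act (kap (ofO c))) (coset (+) v P) = coset (+) (act (kap (ofO c)) v) P"
      by (rule pi_act[OF ksubD(1,2,3)[OF P] Pa vV])
    then show ?thesis by (simp only: smO_fun)
  qed
  have e3: "coset (setplus (+)) (coset (+) x P) (?pi ` ?W) = ?pi ` coset (+) x ?W" for x
    by (rule cosQ[OF P])
  have e4: "coset (setplus (+)) P (?pi ` ?W) = ?pi ` coset (+) 0 ?W"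
    using e3[of 0] by (simp only: pi_zero)
  have e5: "quot (setplus (+)) (?pi ` ?Wi) (?pi ` ?W) = (\<lambda>x. ?pi ` coset (+) x ?W) ` ?Wi"
    unfolding quot_def image_image e3 ..
  have phi: "\<And>x y. x \<in> N \<Longrightarrow> y \<in> N \<Longrightarrow> ?pi ` coset (+) x ?W = ?pi ` coset (+) y ?W \<longleftrightarrow> x - y \<in> ?W"
    by (rule phiQ[OF P V PV])
  have DN: "?Wi \<subseteq> N" by blast
  have F: "qmap (setplus (+)) (?pi ` ?W) (qmap (+) P (smO kap act c)) (?pi ` coset (+) x ?W)
      = ?pi ` coset (+) (smO kap act c x) ?W" if "x \<in> ?Wi" for c x
  proof -
    have xv: "x \<in> VK" using that NVK by blast
    have "qmap (setplus (+)) (?pi ` ?W) (qmap (+) P (act (kap (ofO c)))) (?pi ` coset (+) x ?W)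
      = ?pi ` coset (+) (act (kap (ofO c)) x) ?W"
      by (rule qmapQ[OF P WV W0 Wadd Wact xv])
    then show ?thesis by (simp only: smO_fun)
  qed
  note AP = abs_prim[where W="?W" and phi="\<lambda>x. ?pi ` coset (+) x ?W" and D="?Wi"
      and F="\<lambda>c0. qmap (setplus (+)) (?pi ` ?W) (qmap (+) P (smO kap act c0))" and v=v,
      OF _ W0 Wsm phi DN F v]
  have ext: "(\<forall>c. c \<noteq> 0 \<longrightarrow> (\<forall>x\<in>?Wi. smO kap act c x \<in> setplus (+) {smO kap act d v | d. True} ?W
         \<longrightarrow> x \<in> setplus (+) {smO kap act d v | d. True} ?W))
     \<longleftrightarrow> pure_in (smO kap act) N (setplus (+) {smO kap act c0 v | c0. True} ?W)"
    unfolding pure_in_iff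
  proof (intro iffI allI impI ballI)
    fix c x assume H: "\<forall>c. c \<noteq> 0 \<longrightarrow> (\<forall>x\<in>?Wi. smO kap act c x \<in> setplus (+) {smO kap act d v | d. True} ?W
         \<longrightarrow> x \<in> setplus (+) {smO kap act d v | d. True} ?W)"
      and c: "c \<noteq> 0" and x: "x \<in> N" and cx: "smO kap act c x \<in> setplus (+) {smO kap act c0 v | c0. True} ?W"
    from cx obtain p w where p: "p \<in> {smO kap act c0 v | c0. True}" and w: "w \<in> ?W" and e: "smO kap act c x = p + w"
      unfolding mem_setplus by (elim bexE)
    from p obtain d where pd: "p = smO kap act d v" by blast
    have "p \<in> ?Ri" using pd ksub_sm[OF ksub_rad vR] by simp
    then have "p \<in> ?Vi" using RRi by blast
    moreover have "w \<in> ?Vi" using w VVi by blast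
    ultimately have "smO kap act c x \<in> ?Vi" using e ksubD(3)[OF Vi] by simp
    then have "x \<in> ?Vi" using ksub_div[OF Vi _ c] x NVK by blast
    then have "x \<in> ?Wi" using x by blast
    then show "x \<in> setplus (+) {smO kap act c0 v | c0. True} ?W" using H c cx by blast
  next
    fix c x assume H: "\<forall>c. c \<noteq> 0 \<longrightarrow> (\<forall>x\<in>N. smO kap act c x \<in> setplus (+) {smO kap act c0 v | c0. True} ?W
         \<longrightarrow> x \<in> setplus (+) {smO kap act c0 v | c0. True} ?W)"
      and c: "c \<noteq> 0" and x: "x \<in> ?Wi" and cx: "smO kap act c x \<in> setplus (+) {smO kap act d v | d. True} ?W"
    then show "x \<in> setplus (+) {smO kap act d v | d. True} ?W" by blast
  qed
  have WN: "?W \<subseteq> N" by blast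
  have AP2: "({?pi ` coset (+) (smO kap act c v) ?W | c. True} \<noteq> {?pi ` coset (+) 0 ?W} \<and>
      pure_in (\<lambda>c0. qmap (setplus (+)) (?pi ` ?W) (qmap (+) P (smO kap act c0)))
        ((\<lambda>x. ?pi ` coset (+) x ?W) ` ?Wi) {?pi ` coset (+) (smO kap act c v) ?W | c. True})
     \<longleftrightarrow> (v \<notin> ?W \<and> (\<forall>c. c \<noteq> 0 \<longrightarrow> (\<forall>x\<in>?Wi. smO kap act c x \<in> setplus (+) {smO kap act d v | d. True} ?W
         \<longrightarrow> x \<in> setplus (+) {smO kap act d v | d. True} ?W)))"
    by (rule AP) blast+
  have G: "({?pi ` coset (+) (smO kap act c v) ?W | c. True} \<noteq> {?pi ` coset (+) 0 ?W} \<and>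
      pure_in (\<lambda>c0. qmap (setplus (+)) (?pi ` ?W) (qmap (+) P (smO kap act c0)))
        ((\<lambda>x. ?pi ` coset (+) x ?W) ` ?Wi) {?pi ` coset (+) (smO kap act c v) ?W | c. True})
     \<longleftrightarrow> (v \<notin> ?W \<and> pure_in (smO kap act) N (setplus (+) {smO kap act c0 v | c0. True} ?W))"
    by (rule trans[OF AP2], rule conj_cong[OF refl], rule ext)
  show ?thesis
    unfolding Let_def e1 e2 e3 e4 e5 G by (rule refl)
qed

lemma partC:
  assumes P: "ksub P" and R: "ksub R" and v: "v \<in> N"
    and nv: "v \<notin> N \<inter> setplus (+) R P"
    and pur: "pure_in (smO kap act) N (setplus (+) {smO kap act c0 v | c0. True} (N \<inter> setplus (+) R P))"
  shows "v \<notin> N \<inter> P \<and> pure_in (smO kap act) N (setplus (+) {smO kap act c0 v | c0. True} (N \<inter> P))"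
proof -
  let ?V = "setplus (+) R P"
  have V: "ksub ?V" by (rule ksub_setplus[OF R P])
  have PV: "P \<subseteq> ?V"
  proof
    fix p assume "p \<in> P"
    moreover have "p = 0 + p" by simp
    moreover have "0 \<in> R" by (rule ksubD(2)[OF R])
    ultimately show "p \<in> ?V" unfolding mem_setplus by (intro bexI)
  qed
  have vV: "v \<in> VK" using v NVK by blast
  have "v \<notin> N \<inter> P" using nv PV by blast
  moreover have "pure_in (smO kap act) N (setplus (+) {smO kap act c0 v | c0. True} (N \<inter> P))"
    unfolding pure_in_iff
  proof (intro allI impI ballI)
    fix c x assume c: "c \<noteq> 0" and x: "x \<in> N"
      and cx: "smO kap act c x \<in> setplus (+) {smO kap act c0 v | c0. True} (N \<inter> P)"
    have xV: "x \<in> VK" using x NVK by blast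
    from cx obtain p s where p: "p \<in> {smO kap act c0 v | c0. True}" and s: "s \<in> N \<inter> P"
      and e: "smO kap act c x = p + s" unfolding mem_setplus by (elim bexE)
    from p obtain d' where pd: "p = smO kap act d' v" by blast
    have "s \<in> N \<inter> ?V" using s PV by blast
    then have "smO kap act c x \<in> setplus (+) {smO kap act c0 v | c0. True} (N \<inter> ?V)"
      unfolding mem_setplus using e p by (intro bexI)
    then have "x \<in> setplus (+) {smO kap act c0 v | c0. True} (N \<inter> ?V)"
      using pur c x unfolding pure_in_iff by blast
    then obtain q w where q: "q \<in> {smO kap act c0 v | c0. True}" and w: "w \<in> N \<inter> ?V"
      and xe: "x = q + w" unfolding mem_setplus by (elim bexE)
    from q obtain d where qd: "q = smO kap act d v" by blast
    have wV: "w \<in> VK" using w NVK by blast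
    have dvV: "smO kap act d v \<in> VK" using smO_VK[OF vV] .
    have "smO kap act c x = smO kap act (c * d) v + smO kap act c w"
      using xe qd smO_addv[OF dvV wV] smO_comp[OF vV] by simp
    then have eq: "smO kap act (c * d) v - smO kap act d' v = s - smO kap act c w"
      using e pd by (simp add: algebra_simps)
    have sV: "s \<in> ?V" using s PV by blast
    have cwV: "smO kap act c w \<in> ?V" using w ksub_sm[OF V] by blast
    have "s - smO kap act c w \<in> ?V" by (rule ksub_diff[OF V sV cwV])
    then have inV: "smO kap act (c * d - d') v \<in> ?V" using eq smO_diffsc[OF vV] by simp
    have cd: "c * d = d'"
    proof (rule ccontr)
      assume "c * d \<noteq> d'"
      then have "c * d - d' \<noteq> 0" by simp
      then have "v \<in> ?V" using ksub_div[OF V vV _ inV] by blast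
      then show False using nv v by blast
    qed
    then have "smO kap act c w = s" using eq by simp
    then have "smO kap act c w \<in> P" using s by blast
    then have "w \<in> P" using ksub_div[OF P wV c] by blast
    then have "w \<in> N \<inter> P" using w by blast
    then show "x \<in> setplus (+) {smO kap act c0 v | c0. True} (N \<inter> P)"
      unfolding mem_setplus using xe q by (intro bexI)
  qed
  ultimately show ?thesis by blast
qed

end

theorem proposition4p4:
  fixes kap :: "'o::idom fract \<Rightarrow> 'a::ring_1"
    and A :: "'a set" and X Lam :: "'x set" and e :: "'x \<Rightarrow> 'a" and le :: "'x \<Rightarrow> 'x \<Rightarrow> bool"
    and LK :: "'x \<Rightarrow> 'l1::ab_group_add set" and actK :: "'x \<Rightarrow> 'a \<Rightarrow> 'l1 \<Rightarrow> 'l1"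
    and L :: "'x \<Rightarrow> 'l2::ab_group_add set" and actk :: "'x \<Rightarrow> 'a \<Rightarrow> 'l2 \<Rightarrow> 'l2"
    and act :: "'a \<Rightarrow> 'm::ab_group_add \<Rightarrow> 'm" and VK N :: "'m set"
    and lam :: 'x and v :: 'm
  assumes "is_DVR TYPE('o)"
    and "std_weight_alg kap A X e Lam le LK actK L actk"
    and "A_lattice kap A act VK N"
    and "lam \<in> Lam" and "v \<in> wsp act e N lam"
  shows "(primitive kap e Lam le act VK N lam v \<longleftrightarrow>
            v \<notin> N \<inter> Nprime e Lam le act VK lam \<and>
            pure_in (smO kap act) N
              (setplus (+) {smO kap act c0 v | c0. True} (N \<inter> Nprime e Lam le act VK lam)))
       \<and> (strongly_primitive kap e Lam le act VK N lam v \<longleftrightarrow>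
            (\<exists>i. v \<in> N \<inter> radK act VK i \<and>
                 v \<notin> N \<inter> setplus (+) (radK act VK (Suc i)) (Nprime e Lam le act VK lam) \<and>
                 pure_in (smO kap act) N
                   (setplus (+) {smO kap act c0 v | c0. True}
                      (N \<inter> setplus (+) (radK act VK (Suc i)) (Nprime e Lam le act VK lam)))))
       \<and> (strongly_primitive kap e Lam le act VK N lam v \<longrightarrow> primitive kap e Lam le act VK N lam v)"
proof -
  have SW: "K_algebra kap \<and> O_order kap A \<and> idem_decomp X e A \<and> Lam \<subseteq> X"
    using assms(2) unfolding std_weight_alg_def by (elim conjE) (intro conjI)
  have KA: "K_algebra kap" using SW by (rule conjunct1)
  have OO: "O_order kap A" using SW by (elim conjE)
  have ID: "idem_decomp X e A" using SW by (elim conjE)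
  have LX: "Lam \<subseteq> X" using SW by (elim conjE)
  have mVK: "is_module UNIV act VK" using assms(3) unfolding A_lattice_def by (elim conjE)
  have mN: "is_module A act N" using assms(3) unfolding A_lattice_def by (elim conjE)
  have NVK: "N \<subseteq> VK" using assms(3) unfolding A_lattice_def by (elim conjE)
  have N0: "0 \<in> N" using mN unfolding is_module_def by blast
  have Nadd: "\<And>x y. x \<in> N \<Longrightarrow> y \<in> N \<Longrightarrow> x + y \<in> N" using mN unfolding is_module_def by blast
  have Nneg: "\<And>x. x \<in> N \<Longrightarrow> - x \<in> N" using mN unfolding is_module_def by blast
  have Nact: "\<And>r x. r \<in> A \<Longrightarrow> x \<in> N \<Longrightarrow> act r x \<in> N" using mN unfolding is_module_def by blast
  have Nsm: "\<And>x c. x \<in> N \<Longrightarrow> smO kap act c x \<in> N"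
    unfolding smO_def using Nact kapO_in_A[OF KA OO] by blast
  interpret C: ctx kap act VK N
    by (rule ctx.intro[OF KA mVK NVK N0 Nadd Nneg Nsm])
  have eA: "e lam \<in> A" using ID assms(4) LX unfolding idem_decomp_def by blast
  have v: "v \<in> N" using assms(5) Nact[OF eA] unfolding wsp_def by blast
  let ?NP = "Nprime e Lam le act VK lam"
  have P: "C.ksub ?NP" by (rule C.ksub_NP)
  have a: "primitive kap e Lam le act VK N lam v \<longleftrightarrow>
            v \<notin> N \<inter> ?NP \<and> pure_in (smO kap act) N (setplus (+) {smO kap act c0 v | c0. True} (N \<inter> ?NP))"
    unfolding primitive_def using assms(5) C.partA[OF P v] by simp
  have b: "strongly_primitive kap e Lam le act VK N lam v \<longleftrightarrow>
            (\<exists>i. v \<in> N \<inter> radK act VK i \<and>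
                 v \<notin> N \<inter> setplus (+) (radK act VK (Suc i)) ?NP \<and>
                 pure_in (smO kap act) N
                   (setplus (+) {smO kap act c0 v | c0. True}
                      (N \<inter> setplus (+) (radK act VK (Suc i)) ?NP)))"
    unfolding strongly_primitive_def Let_def C.partB_i[OF P v, unfolded Let_def]
    using assms(5) by (simp only: simp_thms)
  have c: "strongly_primitive kap e Lam le act VK N lam v \<longrightarrow> primitive kap e Lam le act VK N lam v"
  proof
    assume "strongly_primitive kap e Lam le act VK N lam v"
    then obtain i where nv: "v \<notin> N \<inter> setplus (+) (radK act VK (Suc i)) ?NP"
      and pur: "pure_in (smO kap act) N (setplus (+) {smO kap act c0 v | c0. True}
                      (N \<inter> setplus (+) (radK act VK (Suc i)) ?NP))"
      using b by blast
    show "primitive kap e Lam le act VK N lam v"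
      using a C.partC[OF P C.ksub_rad v nv pur] by blast
  qed
  show ?thesis using a b c by blast
qed

end
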